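(* Let $d\ge1$ and let $S$ be an ordinary set. The functions $F:\mathbf H_d\to`S$ are in bijective correspondence with families $(p_s)_{s\in S}$ of pairwise orthogonal projections on $H_d=\mathbb C^d$ with $\sum_{s\in S}p_s=1$ (a projection-valued measurement), via $F(H_d,\mathbb C_s)=L(H_d,\mathbb C_s)\cdot p_s$ for each $s\in S$.
   Context: A quantum set $\mathcal X$ is a set $\mathrm{At}(\mathcal X)$ of nonzero finite-dimensional Hilbert spaces (atoms). A relation $R$ from $\mathcal X$ to $\mathcal Y$ is a choice of subspaces $R(X,Y)\subseteq L(X,Y)$ for all atoms. Composition: $(S\circ R)(X,Z)=\mathrm{span}\{sr: r\in R(X,Y), s\in S(Y,Z), Y\in\mathrm{At}(\mathcal Y)\}$; identity $I_{\mathcal X}(X,X)=\mathbb C 1_X$ and $0$ off the diagonal; adjoint $R^\dagger(Y,X)=\{r^\dagger: r\in R(X,Y)\}$; $R\le S$ iff $R(X,Y)\subseteq S(X,Y)$ for all atoms. A function $F:\mathcal X\to\mathcal Y$ is a relation with $F\circ F^\dagger\le I_{\mathcal Y}$ and $F^\dagger\circ F\ge I_{\mathcal X}$. $\mathbf H_d$ is the quantum set with single atom $H_d=\mathbb C^d$. For an ordinary set $S$, $`S$ is the quantum set with one one-dimensional atom $\mathbb C_s$ for each $s\in S$. Here $L(H_d,\mathbb C_s)\cdot p_s=\{ap_s : a\in L(H_d,\mathbb C_s)\}$. *)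

theory Defs
  imports "Jordan_Normal_Form.Schur_Decomposition"
begin

text \<open>Linear maps between atoms C^m -> C^n are represented by complex n x m matrices
  (JNF type complex mat).  A quantum set is a pair (At, dim): an index set of atoms
  together with the dimension of each atom (the atom indexed by x is C^(dim x)).\<close>

type_synonym 'i qset = "'i set \<times> ('i \<Rightarrow> nat)"

definition At :: "'i qset \<Rightarrow> 'i set" where "At X = fst X"
definition qdim :: "'i qset \<Rightarrow> 'i \<Rightarrow> nat" where "qdim X = snd X"

definition wf_qset :: "'i qset \<Rightarrow> bool" where
  "wf_qset X \<longleftrightarrow> (\<forall>x\<in>At X. qdim X x \<ge> 1)"

definition Lmaps :: "nat \<Rightarrow> nat \<Rightarrow> complex mat set" where
  "Lmaps m n = carrier_mat n m"

definition msubspace :: "nat \<Rightarrow> nat \<Rightarrow> complex mat set \<Rightarrow> bool" where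
  "msubspace m n V \<longleftrightarrow> V \<subseteq> Lmaps m n \<and> 0\<^sub>m n m \<in> V
     \<and> (\<forall>a\<in>V. \<forall>b\<in>V. a + b \<in> V) \<and> (\<forall>c. \<forall>a\<in>V. c \<cdot>\<^sub>m a \<in> V)"

definition mspan :: "nat \<Rightarrow> nat \<Rightarrow> complex mat set \<Rightarrow> complex mat set" where
  "mspan m n A = \<Inter>{V. msubspace m n V \<and> A \<subseteq> V}"

type_synonym ('i, 'j) qrel_t = "'i \<Rightarrow> 'j \<Rightarrow> complex mat set"

text \<open>A relation X -> Y: a subspace R x y of L(x,y) for all atoms (and {} outside atoms,
  to make relations extensional).\<close>
definition qrel :: "'i qset \<Rightarrow> 'j qset \<Rightarrow> ('i, 'j) qrel_t \<Rightarrow> bool" where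
  "qrel X Y R \<longleftrightarrow> (\<forall>x y. if x \<in> At X \<and> y \<in> At Y
       then msubspace (qdim X x) (qdim Y y) (R x y) else R x y = {})"

definition qcomp :: "'i qset \<Rightarrow> 'j qset \<Rightarrow> 'k qset \<Rightarrow> ('j, 'k) qrel_t \<Rightarrow> ('i, 'j) qrel_t
    \<Rightarrow> ('i, 'k) qrel_t" where
  "qcomp X Y Z S R = (\<lambda>x z. if x \<in> At X \<and> z \<in> At Z then
      mspan (qdim X x) (qdim Z z) {s * r | r s y. y \<in> At Y \<and> r \<in> R x y \<and> s \<in> S y z}
    else {})"

definition qid :: "'i qset \<Rightarrow> ('i, 'i) qrel_t" where
  "qid X = (\<lambda>x x'. if x \<in> At X \<and> x' \<in> At X then
      (if x = x' then {c \<cdot>\<^sub>m 1\<^sub>m (qdim X x) | c. True} else {0\<^sub>m (qdim X x') (qdim X x)})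
    else {})"

definition qadj :: "('i, 'j) qrel_t \<Rightarrow> ('j, 'i) qrel_t" where
  "qadj R = (\<lambda>y x. mat_adjoint ` R x y)"

definition qle :: "'i qset \<Rightarrow> 'j qset \<Rightarrow> ('i, 'j) qrel_t \<Rightarrow> ('i, 'j) qrel_t \<Rightarrow> bool" where
  "qle X Y R S \<longleftrightarrow> (\<forall>x\<in>At X. \<forall>y\<in>At Y. R x y \<subseteq> S x y)"

definition qfun :: "'i qset \<Rightarrow> 'j qset \<Rightarrow> ('i, 'j) qrel_t \<Rightarrow> bool" where
  "qfun X Y F \<longleftrightarrow> qrel X Y F
     \<and> qle Y Y (qcomp Y X Y F (qadj F)) (qid Y)
     \<and> qle X X (qid X) (qcomp X Y X (qadj F) F)"

definition qH :: "nat \<Rightarrow> unit qset" where "qH d = ({()}, \<lambda>_. d)"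
definition qclassical :: "'s set \<Rightarrow> 's qset" where "qclassical S = (S, \<lambda>_. 1)"

definition msum :: "nat \<Rightarrow> ('s \<Rightarrow> complex mat) \<Rightarrow> 's set \<Rightarrow> complex mat" where
  "msum d p A = mat d d (\<lambda>(i,j). \<Sum>s\<in>A. p s $$ (i,j))"

text \<open>Projection-valued measurements on C^d indexed by S (extensional: p s = 0 off S).
  The sum over S is the sum over the (finite) set of s with p s nonzero.\<close>
definition PVM :: "nat \<Rightarrow> 's set \<Rightarrow> ('s \<Rightarrow> complex mat) set" where
  "PVM d S = {p. (\<forall>s\<in>S. p s \<in> carrier_mat d d \<and> p s * p s = p s \<and> mat_adjoint (p s) = p s)
     \<and> (\<forall>s\<in>S. \<forall>t\<in>S. s \<noteq> t \<longrightarrow> p s * p t = 0\<^sub>m d d)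
     \<and> (\<forall>s. s \<notin> S \<longrightarrow> p s = 0\<^sub>m d d)
     \<and> finite {s\<in>S. p s \<noteq> 0\<^sub>m d d}
     \<and> msum d p {s\<in>S. p s \<noteq> 0\<^sub>m d d} = 1\<^sub>m d}"

definition pvm_to_fun :: "nat \<Rightarrow> 's set \<Rightarrow> ('s \<Rightarrow> complex mat) \<Rightarrow> (unit, 's) qrel_t" where
  "pvm_to_fun d S p = (\<lambda>x s. if x \<in> At (qH d) \<and> s \<in> S then
      {a * p s | a. a \<in> Lmaps d 1} else {})"

end

theory Submission
  imports Defs
begin


abbreviation adj :: "complex mat \<Rightarrow> complex mat" where "adj \<equiv> mat_adjoint"

lemma adj_eq: "adj A = mat (dim_col A) (dim_row A) (\<lambda>(i,j). cnj (A $$ (j,i)))"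
  unfolding mat_adjoint_def mat_of_rows_def by (rule eq_matI) auto

lemma adj_dims[simp]: "dim_row (adj A) = dim_col A" "dim_col (adj A) = dim_row A"
  by (simp_all add: adj_eq)

lemma adj_index[simp]: "i < dim_col A \<Longrightarrow> j < dim_row A \<Longrightarrow> adj A $$ (i,j) = cnj (A $$ (j,i))"
  by (simp add: adj_eq)

lemma adj_carrier[simp]: "A \<in> carrier_mat n m \<Longrightarrow> adj A \<in> carrier_mat m n"
  by (metis adj_dims carrier_matD carrier_matI)

lemma adj_adj[simp]: "adj (adj A) = A"
  by (rule eq_matI) simp_all

lemma adj_mult: "A \<in> carrier_mat n m \<Longrightarrow> B \<in> carrier_mat m k \<Longrightarrow> adj (A * B) = adj B * adj A"
  by (rule eq_matI) (auto simp: scalar_prod_def cnj_sum mult.commute)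

lemma adj_one[simp]: "adj (1\<^sub>m n) = 1\<^sub>m n"
  by (rule eq_matI) auto

lemma adj_zero[simp]: "adj (0\<^sub>m n m) = 0\<^sub>m m n"
  by (rule eq_matI) auto

lemma adj_add: "A \<in> carrier_mat n m \<Longrightarrow> B \<in> carrier_mat n m \<Longrightarrow> adj (A + B) = adj A + adj B"
  by (rule eq_matI) auto

lemma adj_smult: "adj (c \<cdot>\<^sub>m A) = cnj c \<cdot>\<^sub>m adj A"
  by (rule eq_matI) auto

definition rowm :: "complex mat \<Rightarrow> nat \<Rightarrow> complex mat" where
  "rowm A k = mat 1 (dim_col A) (\<lambda>(_,j). A $$ (k,j))"

lemma rowm_carrier[simp]: "A \<in> carrier_mat n m \<Longrightarrow> rowm A k \<in> carrier_mat 1 m"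
  by (metis carrier_matD(2) mat_carrier rowm_def)

lemma rowm_dims[simp]: "dim_row (rowm A k) = 1" "dim_col (rowm A k) = dim_col A"
  by (simp_all add: rowm_def)

lemma rowm_mult: "A \<in> carrier_mat n m \<Longrightarrow> B \<in> carrier_mat m l \<Longrightarrow> k < n \<Longrightarrow> rowm (A * B) k = rowm A k * B"
  by (rule eq_matI) (auto simp: rowm_def scalar_prod_def)

lemma rows_eq: assumes A: "A \<in> carrier_mat n m" and B: "B \<in> carrier_mat n m"
  and h: "\<And>k. k < n \<Longrightarrow> rowm A k = rowm B k"
  shows "A = B"
proof (rule eq_matI)
  fix i j assume i: "i < dim_row B" and j: "j < dim_col B"
  have "rowm A i $$ (0,j) = rowm B i $$ (0,j)" using h i B by simp
  thus "A $$ (i,j) = B $$ (i,j)" using A B i j by (simp add: rowm_def)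
next
  show "dim_row A = dim_row B" using A B by simp
next
  show "dim_col A = dim_col B" using A B by simp
qed

definition ev :: "nat \<Rightarrow> nat \<Rightarrow> complex mat" where
  "ev n k = mat 1 n (\<lambda>(_,j). if j = k then 1 else 0)"

lemma ev_carrier[simp]: "ev n k \<in> carrier_mat 1 n" by (simp add: ev_def)

lemma rowm_ev: "A \<in> carrier_mat n m \<Longrightarrow> k < n \<Longrightarrow> rowm A k = ev n k * A"
proof (rule eq_matI)
  fix i j assume A: "A \<in> carrier_mat n m" and k: "k < n" and i: "i < dim_row (ev n k * A)" and j: "j < dim_col (ev n k * A)"
  have "(\<Sum>l = 0..<n. (if l = k then 1 else 0) * A $$ (l, j)) = (\<Sum>l \<in> {0..<n}. if l = k then A $$ (l, j) else 0)"
    by (rule sum.cong) auto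
  also have "\<dots> = A $$ (k,j)" using k by simp
  finally show "rowm A k $$ (i, j) = (ev n k * A) $$ (i, j)" using A i j
    by (simp add: rowm_def ev_def scalar_prod_def)
qed (simp_all add: rowm_def ev_def)

lemma rowm_add: assumes "A \<in> carrier_mat n m" "B \<in> carrier_mat n m" "k < n" shows "rowm (A + B) k = rowm A k + rowm B k"
  by (rule eq_matI) (use assms in \<open>simp_all add: rowm_def\<close>)

lemma rowm_smult: "k < dim_row A \<Longrightarrow> rowm (c \<cdot>\<^sub>m A) k = c \<cdot>\<^sub>m rowm A k"
  by (rule eq_matI) (auto simp: rowm_def)

lemma rowm_zero: "k < n \<Longrightarrow> rowm (0\<^sub>m n m) k = 0\<^sub>m 1 m"
  by (rule eq_matI) (auto simp: rowm_def)

lemma one_one_mult: "A \<in> carrier_mat 1 1 \<Longrightarrow> r \<in> carrier_mat 1 m \<Longrightarrow> A * r = (A $$ (0,0)) \<cdot>\<^sub>m r"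
  by (rule eq_matI) (auto simp: scalar_prod_def)

lemma one_one_eq: "A \<in> carrier_mat 1 1 \<Longrightarrow> A = ((A::complex mat) $$ (0,0)) \<cdot>\<^sub>m 1\<^sub>m 1"
  by (rule eq_matI) (auto dest!: carrier_matD)



lemma msubD: assumes "msubspace m n V"
  shows "V \<subseteq> carrier_mat n m" "0\<^sub>m n m \<in> V" "\<And>a b. a \<in> V \<Longrightarrow> b \<in> V \<Longrightarrow> a + b \<in> V"
    "\<And>a c. a \<in> V \<Longrightarrow> c \<cdot>\<^sub>m a \<in> V"
  using assms unfolding msubspace_def Lmaps_def by auto

lemma msubI: assumes "V \<subseteq> carrier_mat n m" "0\<^sub>m n m \<in> V" "\<And>a b. a \<in> V \<Longrightarrow> b \<in> V \<Longrightarrow> a + b \<in> V"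
    "\<And>a c. a \<in> V \<Longrightarrow> c \<cdot>\<^sub>m a \<in> V"
  shows "msubspace m n V"
  using assms unfolding msubspace_def Lmaps_def by auto

lemma mspan_iff: "x \<in> mspan m n A \<longleftrightarrow> (\<forall>V. msubspace m n V \<and> A \<subseteq> V \<longrightarrow> x \<in> V)"
  unfolding mspan_def by auto

lemma mspan_sub: "A \<subseteq> mspan m n A"
  unfolding mspan_def by auto

lemma mspan_least: "msubspace m n V \<Longrightarrow> A \<subseteq> V \<Longrightarrow> mspan m n A \<subseteq> V"
  unfolding mspan_def by auto

lemma rows_comb:
  assumes V: "msubspace d 1 V" and w: "w \<in> carrier_mat n d" and rows: "\<And>k. k < n \<Longrightarrow> rowm w k \<in> V"
    and a: "a \<in> carrier_mat 1 n"
  shows "a * w \<in> V"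
proof -
  define P where "P m = mat 1 d (\<lambda>(_,j). \<Sum>k<m. a $$ (0,k) * w $$ (k,j))" for m
  have "m \<le> n \<Longrightarrow> P m \<in> V" for m
  proof (induction m)
    case 0
    have "P 0 = 0\<^sub>m 1 d" by (rule eq_matI) (auto simp: P_def)
    then show ?case using msubD(2)[OF V] by simp
  next
    case (Suc m)
    have "P (Suc m) = P m + a $$ (0,m) \<cdot>\<^sub>m rowm w m"
      using w by (intro eq_matI) (auto simp: P_def rowm_def)
    then show ?case using Suc msubD(3,4)[OF V] rows by simp
  qed
  moreover have "P n = a * w"
    using a w by (intro eq_matI) (auto simp: P_def scalar_prod_def atLeast0LessThan)
  ultimately show ?thesis by (metis order_refl)
qed

lemma adj_rows_sum:
  assumes E: "msubspace d d E" and X: "X \<in> carrier_mat n d"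
    and rows: "\<And>k. k < n \<Longrightarrow> adj (rowm X k) * rowm X k \<in> E"
  shows "adj X * X \<in> E"
proof -
  define P where "P m = mat d d (\<lambda>(i,j). \<Sum>k<m. cnj (X $$ (k,i)) * X $$ (k,j))" for m
  have "m \<le> n \<Longrightarrow> P m \<in> E" for m
  proof (induction m)
    case 0
    have "P 0 = 0\<^sub>m d d" by (rule eq_matI) (auto simp: P_def)
    then show ?case using msubD(2)[OF E] by simp
  next
    case (Suc m)
    have "P (Suc m) = P m + adj (rowm X m) * rowm X m"
      using X by (intro eq_matI) (auto simp: P_def rowm_def scalar_prod_def)
    then show ?case using Suc msubD(3)[OF E] rows by simp
  qed
  moreover have "P n = adj X * X"
    using X by (intro eq_matI) (auto simp: P_def scalar_prod_def atLeast0LessThan)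
  ultimately show ?thesis by (metis order_refl)
qed

lemma msum_insert: "finite T \<Longrightarrow> s \<notin> T \<Longrightarrow> p s \<in> carrier_mat d d \<Longrightarrow>
  msum d p (insert s T) = p s + msum d p T"
  by (rule eq_matI) (auto simp: msum_def)

lemma msum_carrier[simp]: "msum d p T \<in> carrier_mat d d"
  by (simp add: msum_def)

lemma msum_in:
  assumes E: "msubspace d d E" and T: "finite T" and ps: "\<And>s. s \<in> T \<Longrightarrow> p s \<in> E"
  shows "msum d p T \<in> E"
  using T ps
proof (induction T rule: finite_induct)
  case empty
  have "msum d p {} = 0\<^sub>m d d" by (rule eq_matI) (auto simp: msum_def)
  then show ?case using msubD(2)[OF E] by simp
next
  case (insert s T)
  have "p s \<in> carrier_mat d d" using insert msubD(1)[OF E] by auto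
  then show ?case using insert msubD(3)[OF E] by (simp add: msum_insert)
qed

lemma msum_mult:
  assumes T: "finite T" and X: "X \<in> carrier_mat d n" 
    and ps: "\<And>s. s \<in> T \<Longrightarrow> p s \<in> carrier_mat d d"
  shows "msum d p T * X = mat d n (\<lambda>(i,j). \<Sum>s\<in>T. (p s * X) $$ (i,j))"
proof (rule eq_matI)
  fix i j assume i: "i < dim_row (mat d n (\<lambda>(i,j). \<Sum>s\<in>T. (p s * X) $$ (i,j)))"
    and j: "j < dim_col (mat d n (\<lambda>(i,j). \<Sum>s\<in>T. (p s * X) $$ (i,j)))"
  have "(msum d p T * X) $$ (i,j) = (\<Sum>k<d. (\<Sum>s\<in>T. p s $$ (i,k)) * X $$ (k,j))"
    using i j X by (simp add: msum_def scalar_prod_def atLeast0LessThan)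
  also have "\<dots> = (\<Sum>k<d. \<Sum>s\<in>T. p s $$ (i,k) * X $$ (k,j))"
    by (simp add: sum_distrib_right)
  also have "\<dots> = (\<Sum>s\<in>T. \<Sum>k<d. p s $$ (i,k) * X $$ (k,j))"
    by (rule sum.swap)
  also have "\<dots> = (\<Sum>s\<in>T. (p s * X) $$ (i,j))"
  proof (rule sum.cong)
    fix s assume "s \<in> T"
    then have "p s \<in> carrier_mat d d" by (rule ps)
    then show "(\<Sum>k<d. p s $$ (i,k) * X $$ (k,j)) = (p s * X) $$ (i,j)"
      using i j X by (simp add: scalar_prod_def atLeast0LessThan)
  qed simp
  finally show "(msum d p T * X) $$ (i,j) = mat d n (\<lambda>(i,j). \<Sum>s\<in>T. (p s * X) $$ (i,j)) $$ (i,j)"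
    using i j by simp
qed (use X in \<open>simp_all add: msum_def\<close>)



lemma At_qH[simp]: "At (qH d) = {()}" by (simp add: At_def qH_def)
lemma qdim_qH[simp]: "qdim (qH d) x = d" by (simp add: qdim_def qH_def)
lemma At_qc[simp]: "At (qclassical S) = S" by (simp add: At_def qclassical_def)
lemma qdim_qc[simp]: "qdim (qclassical S) s = 1" by (simp add: qdim_def qclassical_def)

lemma smult_one_m: "A \<in> carrier_mat n m \<Longrightarrow> (1::complex) \<cdot>\<^sub>m A = A"
  by (rule eq_matI) auto

lemma qfunD:
  assumes F: "qfun (qH d) (qclassical S) F"
  shows "s \<in> S \<Longrightarrow> msubspace d 1 (F x s)"
    and "s \<notin> S \<Longrightarrow> F x s = {}"
    and "s \<in> S \<Longrightarrow> t \<in> S \<Longrightarrow> s \<noteq> t \<Longrightarrow> u \<in> F () t \<Longrightarrow> v \<in> F () s \<Longrightarrow> u * adj v = 0\<^sub>m 1 1"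
    and "msubspace d d E \<Longrightarrow> (\<And>s u r. s \<in> S \<Longrightarrow> u \<in> F () s \<Longrightarrow> r \<in> F () s \<Longrightarrow> adj u * r \<in> E) \<Longrightarrow> 1\<^sub>m d \<in> E"
proof -
  have R: "qrel (qH d) (qclassical S) F" using F unfolding qfun_def by blast
  have R1: "if x \<in> At (qH d) \<and> s \<in> At (qclassical S)
       then msubspace (qdim (qH d) x) (qdim (qclassical S) s) (F x s) else F x s = {}"
    using R unfolding qrel_def by blast
  show "s \<in> S \<Longrightarrow> msubspace d 1 (F x s)" using R1 by simp
  show "s \<notin> S \<Longrightarrow> F x s = {}" using R1 by simp
  show "u * adj v = 0\<^sub>m 1 1" if s: "s \<in> S" and t: "t \<in> S" and st: "s \<noteq> t" and u: "u \<in> F () t" and v: "v \<in> F () s"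
  proof -
    have le: "qle (qclassical S) (qclassical S) (qcomp (qclassical S) (qH d) (qclassical S) F (qadj F)) (qid (qclassical S))"
      using F unfolding qfun_def by blast
    have "u * adj v \<in> {s' * r |r s' y. y \<in> At (qH d) \<and> r \<in> qadj F s y \<and> s' \<in> F y t}"
      unfolding qadj_def
      by (rule CollectI, rule exI[of _ "adj v"], rule exI[of _ u], rule exI[of _ "()"]) (simp add: u v)
    hence "u * adj v \<in> mspan 1 1 {s' * r |r s' y. y \<in> At (qH d) \<and> r \<in> qadj F s y \<and> s' \<in> F y t}"
      by (rule subsetD[OF mspan_sub])
    moreover have "qcomp (qclassical S) (qH d) (qclassical S) F (qadj F) s t = 
       mspan 1 1 {s' * r |r s' y. y \<in> At (qH d) \<and> r \<in> qadj F s y \<and> s' \<in> F y t}"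
      using s t by (simp add: qcomp_def)
    ultimately have "u * adj v \<in> qcomp (qclassical S) (qH d) (qclassical S) F (qadj F) s t" by simp
    hence "u * adj v \<in> qid (qclassical S) s t" using le s t unfolding qle_def by auto
    thus ?thesis using s t st by (simp add: qid_def)
  qed
  show "1\<^sub>m d \<in> E" if E: "msubspace d d E" and gens: "\<And>s u r. s \<in> S \<Longrightarrow> u \<in> F () s \<Longrightarrow> r \<in> F () s \<Longrightarrow> adj u * r \<in> E"
  proof -
    have le: "qle (qH d) (qH d) (qid (qH d)) (qcomp (qH d) (qclassical S) (qH d) (qadj F) F)"
      using F unfolding qfun_def by blast
    have e1: "1\<^sub>m d = (1::complex) \<cdot>\<^sub>m 1\<^sub>m d" by (rule smult_one_m[symmetric]) (rule one_carrier_mat)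
    have e2: "1\<^sub>m d \<in> {(c::complex) \<cdot>\<^sub>m 1\<^sub>m d | c. True}" by (rule CollectI, rule exI[of _ 1], rule conjI[OF e1 TrueI])
    have e3: "qid (qH d) () () = {(c::complex) \<cdot>\<^sub>m 1\<^sub>m d | c. True}" by (simp add: qid_def)
    have "1\<^sub>m d \<in> qid (qH d) () ()" using e2 e3 by simp
    hence "1\<^sub>m d \<in> qcomp (qH d) (qclassical S) (qH d) (qadj F) F () ()" using le unfolding qle_def by auto
    hence "1\<^sub>m d \<in> mspan d d {s' * r |r s' y. y \<in> S \<and> r \<in> F () y \<and> s' \<in> qadj F y ()}"
      unfolding qcomp_def by simp
    moreover have "{s' * r |r s' y. y \<in> S \<and> r \<in> F () y \<and> s' \<in> qadj F y ()} \<subseteq> E"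
      using gens by (auto simp: qadj_def)
    ultimately show ?thesis using E mspan_iff by blast
  qed
qed



lemma img_msub:
  assumes P: "P \<in> carrier_mat d d"
  shows "msubspace d 1 {a * P | a. a \<in> Lmaps d 1}"
proof (rule msubI)
  show "{a * P | a. a \<in> Lmaps d 1} \<subseteq> carrier_mat 1 d"
  proof
    fix x assume "x \<in> {a * P | a. a \<in> Lmaps d 1}"
    then obtain a where x: "x = a * P" and a: "a \<in> carrier_mat 1 d" unfolding Lmaps_def by blast
    show "x \<in> carrier_mat 1 d" unfolding x using a P by (rule mult_carrier_mat)
  qed
  have "0\<^sub>m 1 d = 0\<^sub>m 1 d * P" using P by (simp add: left_mult_zero_mat)
  moreover have "(0\<^sub>m 1 d :: complex mat) \<in> Lmaps d 1" unfolding Lmaps_def by simp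
  ultimately show "0\<^sub>m 1 d \<in> {a * P | a. a \<in> Lmaps d 1}" by blast
  fix x y assume "x \<in> {a * P | a. a \<in> Lmaps d 1}" "y \<in> {a * P | a. a \<in> Lmaps d 1}"
  then obtain a b where x: "x = a * P" and a: "a \<in> carrier_mat 1 d"
    and y: "y = b * P" and b: "b \<in> carrier_mat 1 d" unfolding Lmaps_def by blast
  have "x + y = (a + b) * P" unfolding x y using a b P by (simp add: add_mult_distrib_mat)
  moreover have "a + b \<in> Lmaps d 1" unfolding Lmaps_def using a b by simp
  ultimately show "x + y \<in> {a * P | a. a \<in> Lmaps d 1}" by blast
next
  fix x and c :: complex assume "x \<in> {a * P | a. a \<in> Lmaps d 1}"
  then obtain a where x: "x = a * P" and a: "a \<in> carrier_mat 1 d" unfolding Lmaps_def by blast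
  have "c \<cdot>\<^sub>m x = (c \<cdot>\<^sub>m a) * P" unfolding x using a P by (simp add: mult_smult_assoc_mat)
  moreover have "c \<cdot>\<^sub>m a \<in> Lmaps d 1" unfolding Lmaps_def using a by simp
  ultimately show "c \<cdot>\<^sub>m x \<in> {a * P | a. a \<in> Lmaps d 1}" by blast
qed

lemma PVMD:
  assumes "p \<in> PVM d S"
  shows "s \<in> S \<Longrightarrow> p s \<in> carrier_mat d d"
    and "s \<in> S \<Longrightarrow> p s * p s = p s"
    and "s \<in> S \<Longrightarrow> adj (p s) = p s"
    and "s \<in> S \<Longrightarrow> t \<in> S \<Longrightarrow> s \<noteq> t \<Longrightarrow> p s * p t = 0\<^sub>m d d"
    and "s \<notin> S \<Longrightarrow> p s = 0\<^sub>m d d"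
    and "finite {s\<in>S. p s \<noteq> 0\<^sub>m d d}"
    and "msum d p {s\<in>S. p s \<noteq> 0\<^sub>m d d} = 1\<^sub>m d"
  using assms unfolding PVM_def by auto

lemma carrier11_msub: "msubspace 1 1 (carrier_mat 1 1 :: complex mat set)"
  by (rule msubI) auto

lemma zero11_msub: "msubspace 1 1 {0\<^sub>m 1 1 :: complex mat}"
  by (rule msubI) auto

lemma qid11: "{(c::complex) \<cdot>\<^sub>m 1\<^sub>m 1 |c. True} = carrier_mat 1 1"
proof
  show "{(c::complex) \<cdot>\<^sub>m 1\<^sub>m 1 |c. True} \<subseteq> carrier_mat 1 1" by auto
  show "carrier_mat 1 1 \<subseteq> {(c::complex) \<cdot>\<^sub>m 1\<^sub>m 1 |c. True}"
  proof
    fix A :: "complex mat" assume "A \<in> carrier_mat 1 1"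
    then have "A = (A $$ (0,0)) \<cdot>\<^sub>m 1\<^sub>m 1" by (rule one_one_eq)
    then show "A \<in> {(c::complex) \<cdot>\<^sub>m 1\<^sub>m 1 |c. True}" by blast
  qed
qed

lemma pvm_to_fun_eq: "pvm_to_fun d S p x s = (if s \<in> S then {a * p s | a. a \<in> Lmaps d 1} else {})"
  by (simp add: pvm_to_fun_def)



lemma pvm_qrel: assumes p: "p \<in> PVM d S" shows "qrel (qH d) (qclassical S) (pvm_to_fun d S p)"
  unfolding qrel_def
proof (intro allI)
  fix x s
  show "if x \<in> At (qH d) \<and> s \<in> At (qclassical S)
          then msubspace (qdim (qH d) x) (qdim (qclassical S) s) (pvm_to_fun d S p x s)
          else pvm_to_fun d S p x s = {}"
  proof (cases "s \<in> S")
    case True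
    then have "msubspace d 1 {a * p s | a. a \<in> Lmaps d 1}" by (intro img_msub PVMD(1)[OF p])
    then show ?thesis using True by (simp add: pvm_to_fun_eq)
  next
    case False
    then show ?thesis by (simp add: pvm_to_fun_eq)
  qed
qed

lemma gen1:
  assumes p: "p \<in> PVM d S" and s: "s \<in> S" and t: "t \<in> S"
    and x: "x \<in> {s' * r |r s' y. y \<in> At (qH d) \<and> r \<in> qadj (pvm_to_fun d S p) s y \<and> s' \<in> pvm_to_fun d S p y t}"
  shows "\<exists>a b. a \<in> carrier_mat 1 d \<and> b \<in> carrier_mat 1 d \<and> x = (b * p t) * adj (a * p s)"
proof -
  from x obtain r s' y where x: "x = s' * r" and r: "r \<in> qadj (pvm_to_fun d S p) s y"
    and s': "s' \<in> pvm_to_fun d S p y t" by blast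
  from r obtain r0 where r: "r = adj r0" and r0: "r0 \<in> pvm_to_fun d S p y s" unfolding qadj_def by blast
  from r0 s obtain a where r0: "r0 = a * p s" and a: "a \<in> carrier_mat 1 d"
    unfolding pvm_to_fun_eq Lmaps_def by auto
  from s' t obtain b where s': "s' = b * p t" and b: "b \<in> carrier_mat 1 d"
    unfolding pvm_to_fun_eq Lmaps_def by auto
  show ?thesis using a b x r r0 s' by blast
qed

lemma pvm_le1: assumes p: "p \<in> PVM d S"
  shows "qle (qclassical S) (qclassical S) (qcomp (qclassical S) (qH d) (qclassical S) (pvm_to_fun d S p) (qadj (pvm_to_fun d S p))) (qid (qclassical S))"
  unfolding qle_def
proof (intro ballI)
  fix s t assume s: "s \<in> At (qclassical S)" and t: "t \<in> At (qclassical S)"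
  hence s: "s \<in> S" and t: "t \<in> S" by simp_all
  let ?F = "pvm_to_fun d S p"
  let ?G = "{s' * r |r s' y. y \<in> At (qH d) \<and> r \<in> qadj ?F s y \<and> s' \<in> ?F y t}"
  have eq: "qcomp (qclassical S) (qH d) (qclassical S) ?F (qadj ?F) s t = mspan 1 1 ?G"
    using s t by (simp add: qcomp_def)
  have ps: "p s \<in> carrier_mat d d" and pt: "p t \<in> carrier_mat d d" using PVMD(1)[OF p] s t by auto
  show "qcomp (qclassical S) (qH d) (qclassical S) ?F (qadj ?F) s t \<subseteq> qid (qclassical S) s t"
  proof (cases "s = t")
    case True
    have "qid (qclassical S) s t = {(c::complex) \<cdot>\<^sub>m 1\<^sub>m 1 |c. True}" using True s by (simp add: qid_def)
    also note qid11
    finally have "qid (qclassical S) s t = carrier_mat 1 1" .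
    moreover have Gs: "?G \<subseteq> carrier_mat 1 1"
    proof
      fix x assume "x \<in> ?G"
      then obtain a b where a: "a \<in> carrier_mat 1 d" and b: "b \<in> carrier_mat 1 d" and x: "x = (b * p t) * adj (a * p s)"
        using gen1[OF p s t] by blast
      have "b * p t \<in> carrier_mat 1 d" using b pt by (rule mult_carrier_mat)
      moreover have "adj (a * p s) \<in> carrier_mat d 1" using a ps by (simp add: mult_carrier_mat)
      ultimately show "x \<in> carrier_mat 1 1" unfolding x by (rule mult_carrier_mat)
    qed
    moreover have "mspan 1 1 ?G \<subseteq> carrier_mat 1 1" by (rule mspan_least[OF carrier11_msub Gs])
    ultimately show ?thesis unfolding eq by simp
  next
    case False
    have "qid (qclassical S) s t = {0\<^sub>m 1 1}" using False s t by (simp add: qid_def)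
    moreover have Gs: "?G \<subseteq> {0\<^sub>m 1 1}"
    proof
      fix x assume "x \<in> ?G"
      then obtain a b where a: "a \<in> carrier_mat 1 d" and b: "b \<in> carrier_mat 1 d" and x: "x = (b * p t) * adj (a * p s)"
        using gen1[OF p s t] by blast
      have aa: "adj a \<in> carrier_mat d 1" using a by simp
      have "adj (a * p s) = adj (p s) * adj a" using a ps by (rule adj_mult)
      also have "\<dots> = p s * adj a" using PVMD(3)[OF p s] by simp
      finally have "x = (b * p t) * (p s * adj a)" unfolding x by simp
      also have "\<dots> = b * (p t * (p s * adj a))" using b pt ps aa
        by (meson assoc_mult_mat mult_carrier_mat)
      also have "\<dots> = b * ((p t * p s) * adj a)" using pt ps aa
        by (simp add: assoc_mult_mat)
      also have "\<dots> = b * (0\<^sub>m d d * adj a)" using PVMD(4)[OF p t s] False by simp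
      also have "\<dots> = b * 0\<^sub>m d 1" using aa by (simp add: left_mult_zero_mat)
      also have "\<dots> = 0\<^sub>m 1 1" using b by (rule right_mult_zero_mat)
      finally show "x \<in> {0\<^sub>m 1 1}" by simp
    qed
    moreover have "mspan 1 1 ?G \<subseteq> {0\<^sub>m 1 1}" by (rule mspan_least[OF zero11_msub Gs])
    ultimately show ?thesis unfolding eq by simp
  qed
qed



lemma pvm_le2: assumes p: "p \<in> PVM d S"
  shows "qle (qH d) (qH d) (qid (qH d)) (qcomp (qH d) (qclassical S) (qH d) (qadj (pvm_to_fun d S p)) (pvm_to_fun d S p))"
  unfolding qle_def
proof (intro ballI)
  fix x y assume "x \<in> At (qH d)" "y \<in> At (qH d)"
  let ?F = "pvm_to_fun d S p"
  let ?G = "{s' * r |r s' y. y \<in> S \<and> r \<in> ?F () y \<and> s' \<in> qadj ?F y ()}"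
  have eq: "qcomp (qH d) (qclassical S) (qH d) (qadj ?F) ?F x y = mspan d d ?G"
    by (simp add: qcomp_def)
  have eq2: "qid (qH d) x y = {(c::complex) \<cdot>\<^sub>m 1\<^sub>m d | c. True}"
    by (simp add: qid_def)
  have one: "1\<^sub>m d \<in> V" if V: "msubspace d d V" and GV: "?G \<subseteq> V" for V
  proof -
    have "p s \<in> V" if s: "s \<in> S" for s
    proof -
      have ps: "p s \<in> carrier_mat d d" using PVMD(1)[OF p s] .
      have "adj (rowm (p s) k) * rowm (p s) k \<in> V" if k: "k < d" for k
      proof -
        have "rowm (p s) k = ev d k * p s" using ps k by (rule rowm_ev)
        moreover have "ev d k \<in> Lmaps d 1" unfolding Lmaps_def by (rule ev_carrier)
        ultimately have r: "rowm (p s) k \<in> ?F () s" using s unfolding pvm_to_fun_eq by auto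
        hence "adj (rowm (p s) k) \<in> qadj ?F s ()" unfolding qadj_def by (rule imageI)
        with r s have "adj (rowm (p s) k) * rowm (p s) k \<in> ?G" by blast
        thus ?thesis using GV by (rule subsetD[rotated])
      qed
      hence "adj (p s) * p s \<in> V" by (rule adj_rows_sum[OF V ps])
      thus ?thesis using PVMD(2,3)[OF p s] by simp
    qed
    hence "msum d p {s\<in>S. p s \<noteq> 0\<^sub>m d d} \<in> V" by (intro msum_in[OF V PVMD(6)[OF p]]) simp
    thus ?thesis using PVMD(7)[OF p] by simp
  qed
  show "qid (qH d) x y \<subseteq> qcomp (qH d) (qclassical S) (qH d) (qadj ?F) ?F x y"
  proof
    fix z assume "z \<in> qid (qH d) x y"
    then obtain c :: complex where z: "z = c \<cdot>\<^sub>m 1\<^sub>m d" unfolding eq2 by blast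
    have "z \<in> V" if V: "msubspace d d V" and GV: "?G \<subseteq> V" for V
      unfolding z using one[OF V GV] by (rule msubD(4)[OF V])
    thus "z \<in> qcomp (qH d) (qclassical S) (qH d) (qadj ?F) ?F x y" unfolding eq mspan_iff by blast
  qed
qed

lemma pvm_qfun: "p \<in> PVM d S \<Longrightarrow> qfun (qH d) (qclassical S) (pvm_to_fun d S p)"
  unfolding qfun_def using pvm_qrel pvm_le1 pvm_le2 by blast



lemma half:
  assumes p: "p \<in> carrier_mat d d" and q: "q \<in> carrier_mat d d" and pp: "p * p = p"
    and sub: "{a * q | a. a \<in> Lmaps d 1} \<subseteq> {a * p | a. a \<in> Lmaps d 1}"
  shows "q * p = q"
proof (rule rows_eq)
  show "q * p \<in> carrier_mat d d" using q p by (rule mult_carrier_mat)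
  show "q \<in> carrier_mat d d" by (rule q)
  fix k assume k: "k < d"
  have "rowm q k = ev d k * q" using q k by (rule rowm_ev)
  moreover have "ev d k \<in> Lmaps d 1" unfolding Lmaps_def by (rule ev_carrier)
  ultimately have "rowm q k \<in> {a * q | a. a \<in> Lmaps d 1}" by blast
  with sub have "rowm q k \<in> {a * p | a. a \<in> Lmaps d 1}" by blast
  then obtain a where a: "a \<in> carrier_mat 1 d" and ra: "rowm q k = a * p" unfolding Lmaps_def by blast
  have "rowm (q * p) k = rowm q k * p" using q p k by (rule rowm_mult)
  also have "\<dots> = a * p * p" by (simp add: ra)
  also have "\<dots> = a * (p * p)" using a p by (simp add: assoc_mult_mat)
  also have "\<dots> = rowm q k" using pp ra by simp
  finally show "rowm (q * p) k = rowm q k" .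
qed

lemma proj_eq:
  assumes p: "p \<in> carrier_mat d d" and q: "q \<in> carrier_mat d d" and pp: "p * p = p" and qq: "q * q = q"
    and pa: "adj p = p" and qa: "adj q = q"
    and eq: "{a * q | a. a \<in> Lmaps d 1} = {a * p | a. a \<in> Lmaps d 1}"
  shows "p = q"
proof -
  have qp: "q * p = q" using p q pp equalityD1[OF eq] by (rule half)
  have pq: "p * q = p" using q p qq equalityD2[OF eq] by (rule half)
  have "q = adj q" using qa by simp
  also have "\<dots> = adj (q * p)" using qp by simp
  also have "\<dots> = adj p * adj q" using q p by (rule adj_mult)
  also have "\<dots> = p * q" using pa qa by simp
  also have "\<dots> = p" by (rule pq)
  finally show ?thesis by simp
qed

lemma pvm_inj: "inj_on (pvm_to_fun d S) (PVM d S)"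
proof (rule inj_onI)
  fix p q assume p: "p \<in> PVM d S" and q: "q \<in> PVM d S" and e: "pvm_to_fun d S p = pvm_to_fun d S q"
  show "p = q"
  proof
    fix s show "p s = q s"
    proof (cases "s \<in> S")
      case True
      have "pvm_to_fun d S q () s = pvm_to_fun d S p () s" using e by simp
      hence "{a * q s | a. a \<in> Lmaps d 1} = {a * p s | a. a \<in> Lmaps d 1}" using True by (simp add: pvm_to_fun_eq)
      moreover have "p s \<in> carrier_mat d d" "q s \<in> carrier_mat d d" "p s * p s = p s" "q s * q s = q s"
        "adj (p s) = p s" "adj (q s) = q s"
        using PVMD(1,2,3)[OF p True] PVMD(1,2,3)[OF q True] by simp_all
      ultimately show ?thesis using proj_eq by blast
    next
      case False
      then show ?thesis using PVMD(5)[OF p] PVMD(5)[OF q] by simp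
    qed
  qed
qed



lemma O2:
  assumes v: "v \<in> carrier_mat 1 d" and X: "X \<in> carrier_mat n d"
    and h: "\<And>j. j < n \<Longrightarrow> v * adj (rowm X j) = 0\<^sub>m 1 1"
  shows "v * adj X = 0\<^sub>m 1 n"
proof (rule eq_matI)
  fix i j assume i: "i < dim_row (0\<^sub>m 1 n :: complex mat)" and j: "j < dim_col (0\<^sub>m 1 n :: complex mat)"
  hence i0: "i = 0" and jn: "j < n" by auto
  have "(v * adj X) $$ (i,j) = (\<Sum>l<d. v $$ (0,l) * cnj (X $$ (j,l)))"
    using v X i0 jn by (simp add: scalar_prod_def atLeast0LessThan)
  also have "\<dots> = (v * adj (rowm X j)) $$ (0,0)"
    using v X jn by (simp add: scalar_prod_def atLeast0LessThan rowm_def)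
  also have "\<dots> = 0" using h[OF jn] by simp
  finally show "(v * adj X) $$ (i,j) = (0\<^sub>m 1 n :: complex mat) $$ (i,j)" using i j by simp
next
  show "dim_row (v * adj X) = dim_row (0\<^sub>m 1 n :: complex mat)" using v by simp
next
  show "dim_col (v * adj X) = dim_col (0\<^sub>m 1 n :: complex mat)" using X by simp
qed

lemma add4:
  assumes "A \<in> carrier_mat n m" "B \<in> carrier_mat n m" "C \<in> carrier_mat n m" "D \<in> carrier_mat n m"
  shows "(A + B) + (C + D) = (A + C) + ((B::complex mat) + D)"
  by (rule eq_matI) (use assms in simp_all)

lemma mult3: assumes "A \<in> carrier_mat n m" "B \<in> carrier_mat m k" "C \<in> carrier_mat k l"
  shows "A * B * C = A * (B * C)" using assms by (rule assoc_mult_mat)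



context
  fixes d :: nat and S :: "'s set" and F :: "(unit, 's) qrel_t"
  assumes F: "qfun (qH d) (qclassical S) F"
begin

lemma Vsub: "s \<in> S \<Longrightarrow> msubspace d 1 (F () s)"
  using qfunD(1)[OF F] by blast

lemma Vcar: "s \<in> S \<Longrightarrow> v \<in> F () s \<Longrightarrow> v \<in> carrier_mat 1 d"
  using msubD(1)[OF Vsub] by blast

lemma orth: "s \<in> S \<Longrightarrow> t \<in> S \<Longrightarrow> s \<noteq> t \<Longrightarrow> v \<in> F () s \<Longrightarrow> u \<in> F () t \<Longrightarrow> v * adj u = 0\<^sub>m 1 1"
  using qfunD(3)[OF F, of t s v u] by simp

definition PP :: "'s \<Rightarrow> complex mat set" where
  "PP s = {M \<in> carrier_mat d d. \<forall>k<d. rowm M k \<in> F () s}"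
definition QQ :: "'s \<Rightarrow> complex mat set" where
  "QQ s = {N \<in> carrier_mat d d. \<forall>v\<in>F () s. v * N = 0\<^sub>m 1 d \<and> v * adj N = 0\<^sub>m 1 d}"
definition EE :: "'s \<Rightarrow> complex mat set" where
  "EE s = {M. \<exists>w N. w \<in> PP s \<and> N \<in> QQ s \<and> M = w + N}"

lemma PP_msub: assumes s: "s \<in> S" shows "msubspace d d (PP s)"
proof (rule msubI)
  show "PP s \<subseteq> carrier_mat d d" unfolding PP_def by blast
  have "rowm (0\<^sub>m d d) k \<in> F () s" if "k < d" for k
    using rowm_zero[OF that] msubD(2)[OF Vsub[OF s]] by simp
  then show "0\<^sub>m d d \<in> PP s" unfolding PP_def by simp
next
  fix a b assume a: "a \<in> PP s" and b: "b \<in> PP s"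
  have "rowm (a + b) k \<in> F () s" if k: "k < d" for k
  proof -
    have "rowm (a + b) k = rowm a k + rowm b k" using a b k unfolding PP_def by (intro rowm_add) auto
    moreover have "rowm a k \<in> F () s" "rowm b k \<in> F () s" using a b k unfolding PP_def by auto
    ultimately show ?thesis using msubD(3)[OF Vsub[OF s]] by simp
  qed
  moreover have "a + b \<in> carrier_mat d d" using a b unfolding PP_def by auto
  ultimately show "a + b \<in> PP s" unfolding PP_def by blast
next
  fix a and c :: complex assume a: "a \<in> PP s"
  have "rowm (c \<cdot>\<^sub>m a) k \<in> F () s" if k: "k < d" for k
  proof -
    have "rowm (c \<cdot>\<^sub>m a) k = c \<cdot>\<^sub>m rowm a k" using a k unfolding PP_def by (intro rowm_smult) auto
    moreover have "rowm a k \<in> F () s" using a k unfolding PP_def by auto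
    ultimately show ?thesis using msubD(4)[OF Vsub[OF s]] by simp
  qed
  moreover have "c \<cdot>\<^sub>m a \<in> carrier_mat d d" using a unfolding PP_def by auto
  ultimately show "c \<cdot>\<^sub>m a \<in> PP s" unfolding PP_def by blast
qed

lemma QQ_msub: assumes s: "s \<in> S" shows "msubspace d d (QQ s)"
proof (rule msubI)
  show "QQ s \<subseteq> carrier_mat d d" unfolding QQ_def by blast
  have "v * 0\<^sub>m d d = 0\<^sub>m 1 d \<and> v * adj (0\<^sub>m d d) = 0\<^sub>m 1 d" if "v \<in> F () s" for v
    using Vcar[OF s that] by simp
  then show "0\<^sub>m d d \<in> QQ s" unfolding QQ_def by simp
next
  fix a b assume a: "a \<in> QQ s" and b: "b \<in> QQ s"
  have ac: "a \<in> carrier_mat d d" and bc: "b \<in> carrier_mat d d" using a b unfolding QQ_def by auto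
  have "v * (a + b) = 0\<^sub>m 1 d \<and> v * adj (a + b) = 0\<^sub>m 1 d" if v: "v \<in> F () s" for v
  proof -
    have vc: "v \<in> carrier_mat 1 d" by (rule Vcar[OF s v])
    have "v * (a + b) = v * a + v * b" using vc ac bc by (rule mult_add_distrib_mat)
    also have "\<dots> = 0\<^sub>m 1 d + 0\<^sub>m 1 d" using a b v unfolding QQ_def by auto
    also have "\<dots> = 0\<^sub>m 1 d" by simp
    finally have 1: "v * (a + b) = 0\<^sub>m 1 d" .
    have "v * adj (a + b) = v * (adj a + adj b)" using ac bc by (simp add: adj_add)
    also have "\<dots> = v * adj a + v * adj b" using vc ac bc by (intro mult_add_distrib_mat) auto
    also have "\<dots> = 0\<^sub>m 1 d + 0\<^sub>m 1 d" using a b v unfolding QQ_def by auto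
    also have "\<dots> = 0\<^sub>m 1 d" by simp
    finally show ?thesis using 1 by simp
  qed
  moreover have "a + b \<in> carrier_mat d d" using ac bc by simp
  ultimately show "a + b \<in> QQ s" unfolding QQ_def by blast
next
  fix a and c :: complex assume a: "a \<in> QQ s"
  have ac: "a \<in> carrier_mat d d" using a unfolding QQ_def by auto
  have "v * (c \<cdot>\<^sub>m a) = 0\<^sub>m 1 d \<and> v * adj (c \<cdot>\<^sub>m a) = 0\<^sub>m 1 d" if v: "v \<in> F () s" for v
  proof -
    have vc: "v \<in> carrier_mat 1 d" by (rule Vcar[OF s v])
    have "v * (c \<cdot>\<^sub>m a) = c \<cdot>\<^sub>m (v * a)" using vc ac by (rule mult_smult_distrib)
    also have "\<dots> = 0\<^sub>m 1 d" using a v unfolding QQ_def by auto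
    finally have 1: "v * (c \<cdot>\<^sub>m a) = 0\<^sub>m 1 d" .
    have "v * adj (c \<cdot>\<^sub>m a) = v * (cnj c \<cdot>\<^sub>m adj a)" by (simp add: adj_smult)
    also have "\<dots> = cnj c \<cdot>\<^sub>m (v * adj a)" using vc ac by (intro mult_smult_distrib) auto
    also have "\<dots> = 0\<^sub>m 1 d" using a v unfolding QQ_def by auto
    finally show ?thesis using 1 by simp
  qed
  moreover have "c \<cdot>\<^sub>m a \<in> carrier_mat d d" using ac by simp
  ultimately show "c \<cdot>\<^sub>m a \<in> QQ s" unfolding QQ_def by blast
qed

lemma EE_msub: assumes s: "s \<in> S" shows "msubspace d d (EE s)"
proof (rule msubI)
  show "EE s \<subseteq> carrier_mat d d"
  proof
    fix M assume "M \<in> EE s"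
    then obtain w N where w: "w \<in> PP s" and N: "N \<in> QQ s" and M: "M = w + N" unfolding EE_def by blast
    show "M \<in> carrier_mat d d" using w N unfolding M PP_def QQ_def by auto
  qed
  have "0\<^sub>m d d = 0\<^sub>m d d + (0\<^sub>m d d :: complex mat)" by simp
  then show "0\<^sub>m d d \<in> EE s" unfolding EE_def
    using msubD(2)[OF PP_msub[OF s]] msubD(2)[OF QQ_msub[OF s]] by blast
next
  fix a b assume "a \<in> EE s" "b \<in> EE s"
  then obtain w N w' N' where w: "w \<in> PP s" and N: "N \<in> QQ s" and a: "a = w + N"
    and w': "w' \<in> PP s" and N': "N' \<in> QQ s" and b: "b = w' + N'" unfolding EE_def by blast
  have "a + b = (w + w') + (N + N')" unfolding a b
    using w N w' N' unfolding PP_def QQ_def by (intro add4) auto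
  moreover have "w + w' \<in> PP s" using w w' by (rule msubD(3)[OF PP_msub[OF s]])
  moreover have "N + N' \<in> QQ s" using N N' by (rule msubD(3)[OF QQ_msub[OF s]])
  ultimately show "a + b \<in> EE s" unfolding EE_def by blast
next
  fix a and c :: complex assume "a \<in> EE s"
  then obtain w N where w: "w \<in> PP s" and N: "N \<in> QQ s" and a: "a = w + N" unfolding EE_def by blast
  have "c \<cdot>\<^sub>m a = c \<cdot>\<^sub>m w + c \<cdot>\<^sub>m N" unfolding a
    using w N unfolding PP_def QQ_def by (intro add_smult_distrib_left_mat) auto
  moreover have "c \<cdot>\<^sub>m w \<in> PP s" using w by (rule msubD(4)[OF PP_msub[OF s]])
  moreover have "c \<cdot>\<^sub>m N \<in> QQ s" using N by (rule msubD(4)[OF QQ_msub[OF s]])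
  ultimately show "c \<cdot>\<^sub>m a \<in> EE s" unfolding EE_def by blast
qed


lemma gen_PP: assumes t: "t \<in> S" and u: "u \<in> F () t" and r: "r \<in> F () t"
  shows "adj u * r \<in> PP t"
proof -
  have uc: "adj u \<in> carrier_mat d 1" using Vcar[OF t u] by simp
  have rc: "r \<in> carrier_mat 1 d" using Vcar[OF t r] .
  have "rowm (adj u * r) k \<in> F () t" if k: "k < d" for k
  proof -
    have "rowm (adj u * r) k = rowm (adj u) k * r" using uc rc k by (rule rowm_mult)
    also have "\<dots> = (rowm (adj u) k $$ (0,0)) \<cdot>\<^sub>m r" by (rule one_one_mult[OF rowm_carrier[OF uc] rc])
    finally show ?thesis using msubD(4)[OF Vsub[OF t] r] by simp
  qed
  moreover have "adj u * r \<in> carrier_mat d d" using uc rc by (rule mult_carrier_mat)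
  ultimately show ?thesis unfolding PP_def by blast
qed

lemma gen_zero: assumes s: "s \<in> S" and t: "t \<in> S" and st: "s \<noteq> t" and u: "u \<in> F () t" and r: "r \<in> F () t"
  and v: "v \<in> F () s"
  shows "v * (adj u * r) = 0\<^sub>m 1 d"
proof -
  have uc: "adj u \<in> carrier_mat d 1" using Vcar[OF t u] by simp
  have rc: "r \<in> carrier_mat 1 d" using Vcar[OF t r] .
  have vc: "v \<in> carrier_mat 1 d" using Vcar[OF s v] .
  have "v * (adj u * r) = (v * adj u) * r" using vc uc rc by (simp add: assoc_mult_mat)
  also have "\<dots> = 0\<^sub>m 1 1 * r" using orth[OF s t st v u] by simp
  also have "\<dots> = 0\<^sub>m 1 d" using rc by (rule left_mult_zero_mat)
  finally show ?thesis .
qed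

lemma gen_QQ: assumes s: "s \<in> S" and t: "t \<in> S" and st: "s \<noteq> t" and u: "u \<in> F () t" and r: "r \<in> F () t"
  shows "adj u * r \<in> QQ s"
proof -
  have uc: "adj u \<in> carrier_mat d 1" using Vcar[OF t u] by simp
  have rc: "r \<in> carrier_mat 1 d" using Vcar[OF t r] .
  have "v * (adj u * r) = 0\<^sub>m 1 d \<and> v * adj (adj u * r) = 0\<^sub>m 1 d" if v: "v \<in> F () s" for v
  proof -
    have "adj (adj u * r) = adj r * adj (adj u)" using uc rc by (rule adj_mult)
    hence "adj (adj u * r) = adj r * u" by simp
    thus ?thesis using gen_zero[OF s t st u r v] gen_zero[OF s t st r u v] by simp
  qed
  moreover have "adj u * r \<in> carrier_mat d d" using uc rc by (rule mult_carrier_mat)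
  ultimately show ?thesis unfolding QQ_def by blast
qed

lemma one_EE: assumes s: "s \<in> S" shows "1\<^sub>m d \<in> EE s"
proof (rule qfunD(4)[OF F EE_msub[OF s]])
  fix t u r assume t: "t \<in> S" and u: "u \<in> F () t" and r: "r \<in> F () t"
  have gc: "adj u * r \<in> carrier_mat d d" by (rule mult_carrier_mat[OF adj_carrier[OF Vcar[OF t u]] Vcar[OF t r]])
  show "adj u * r \<in> EE s"
  proof (cases "t = s")
    case True
    have "adj u * r = adj u * r + 0\<^sub>m d d" using gc by simp
    moreover have "adj u * r \<in> PP s" using gen_PP[OF t u r] True by simp
    moreover have "0\<^sub>m d d \<in> QQ s" by (rule msubD(2)[OF QQ_msub[OF s]])
    ultimately show ?thesis unfolding EE_def by blast
  next
    case False
    have "adj u * r = 0\<^sub>m d d + adj u * r" using gc by simp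
    moreover have "0\<^sub>m d d \<in> PP s" by (rule msubD(2)[OF PP_msub[OF s]])
    moreover have "adj u * r \<in> QQ s" using gen_QQ[OF s t _ u r] False by simp
    ultimately show ?thesis unfolding EE_def by blast
  qed
qed

definition W :: "'s \<Rightarrow> complex mat" where
  "W s = (SOME w. w \<in> PP s \<and> (\<exists>N. N \<in> QQ s \<and> 1\<^sub>m d = w + N))"

lemma W_ex: assumes s: "s \<in> S" shows "W s \<in> PP s \<and> (\<exists>N. N \<in> QQ s \<and> 1\<^sub>m d = W s + N)"
proof -
  from one_EE[OF s] obtain w N where "w \<in> PP s" "N \<in> QQ s" "1\<^sub>m d = w + N" unfolding EE_def by blast
  hence "\<exists>w. w \<in> PP s \<and> (\<exists>N. N \<in> QQ s \<and> 1\<^sub>m d = w + N)" by blast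
  thus ?thesis unfolding W_def by (rule someI_ex)
qed

lemma W_carrier: "s \<in> S \<Longrightarrow> W s \<in> carrier_mat d d"
  using W_ex unfolding PP_def by blast

lemma W_row: "s \<in> S \<Longrightarrow> k < d \<Longrightarrow> rowm (W s) k \<in> F () s"
  using W_ex unfolding PP_def by blast

lemma W_fix: assumes s: "s \<in> S" and v: "v \<in> F () s" shows "v * W s = v"
proof -
  obtain N where N: "N \<in> QQ s" and one: "1\<^sub>m d = W s + N" using W_ex[OF s] by blast
  have vc: "v \<in> carrier_mat 1 d" using Vcar[OF s v] .
  have Nc: "N \<in> carrier_mat d d" using N unfolding QQ_def by blast
  have "v = v * 1\<^sub>m d" using vc by simp
  also have "\<dots> = v * W s + v * N" unfolding one using vc W_carrier[OF s] Nc by (rule mult_add_distrib_mat)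
  also have "\<dots> = v * W s + 0\<^sub>m 1 d" using N v unfolding QQ_def by auto
  also have "\<dots> = v * W s" using vc W_carrier[OF s] by simp
  finally show ?thesis by simp
qed

lemma W_sa: assumes s: "s \<in> S" shows "adj (W s) = W s"
proof -
  obtain N where N: "N \<in> QQ s" and one: "1\<^sub>m d = W s + N" using W_ex[OF s] by blast
  have Wc: "W s \<in> carrier_mat d d" by (rule W_carrier[OF s])
  have Nc: "N \<in> carrier_mat d d" using N unfolding QQ_def by blast
  have z: "W s * adj N = 0\<^sub>m d d"
  proof (rule rows_eq)
    show "W s * adj N \<in> carrier_mat d d" using Wc Nc by simp
    show "0\<^sub>m d d \<in> carrier_mat d d" by simp
    fix k assume k: "k < d"
    have "rowm (W s * adj N) k = rowm (W s) k * adj N" using Wc adj_carrier[OF Nc] k by (rule rowm_mult)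
    also have "\<dots> = 0\<^sub>m 1 d" using N W_row[OF s k] unfolding QQ_def by auto
    also have "\<dots> = rowm (0\<^sub>m d d) k" using k by (simp add: rowm_zero)
    finally show "rowm (W s * adj N) k = rowm (0\<^sub>m d d) k" .
  qed
  have "W s = W s * 1\<^sub>m d" using Wc by simp
  also have "\<dots> = W s * adj (W s + N)" unfolding one[symmetric] by simp
  also have "\<dots> = W s * (adj (W s) + adj N)" using Wc Nc by (simp add: adj_add)
  also have "\<dots> = W s * adj (W s) + W s * adj N" using Wc Nc by (intro mult_add_distrib_mat) auto
  also have "\<dots> = W s * adj (W s)" using z Wc by simp
  finally have e: "W s = W s * adj (W s)" .
  have "adj (W s) = adj (W s * adj (W s))" using e by simp
  also have "\<dots> = adj (adj (W s)) * adj (W s)" using Wc by (intro adj_mult) auto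
  also have "\<dots> = W s" using e by simp
  finally show ?thesis .
qed

lemma W_idem: assumes s: "s \<in> S" shows "W s * W s = W s"
proof (rule rows_eq)
  have Wc: "W s \<in> carrier_mat d d" by (rule W_carrier[OF s])
  show "W s * W s \<in> carrier_mat d d" using Wc by simp
  show "W s \<in> carrier_mat d d" by (rule Wc)
  fix k assume k: "k < d"
  have "rowm (W s * W s) k = rowm (W s) k * W s" using Wc Wc k by (rule rowm_mult)
  also have "\<dots> = rowm (W s) k" using W_fix[OF s W_row[OF s k]] .
  finally show "rowm (W s * W s) k = rowm (W s) k" .
qed

lemma W_img: assumes s: "s \<in> S" shows "{a * W s | a. a \<in> Lmaps d 1} = F () s"
proof
  show "{a * W s | a. a \<in> Lmaps d 1} \<subseteq> F () s"
  proof
    fix x assume "x \<in> {a * W s | a. a \<in> Lmaps d 1}"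
    then obtain a where x: "x = a * W s" and a: "a \<in> carrier_mat 1 d" unfolding Lmaps_def by blast
    show "x \<in> F () s" unfolding x using Vsub[OF s] W_carrier[OF s] W_row[OF s] a by (rule rows_comb)
  qed
  show "F () s \<subseteq> {a * W s | a. a \<in> Lmaps d 1}"
  proof
    fix v assume v: "v \<in> F () s"
    have "v = v * W s" using W_fix[OF s v] by simp
    moreover have "v \<in> Lmaps d 1" unfolding Lmaps_def by (rule Vcar[OF s v])
    ultimately show "v \<in> {a * W s | a. a \<in> Lmaps d 1}" by blast
  qed
qed

lemma row_orth: assumes s: "s \<in> S" and t: "t \<in> S" and st: "s \<noteq> t" and v: "v \<in> F () s"
  shows "v * adj (W t) = 0\<^sub>m 1 d"
  using Vcar[OF s v] W_carrier[OF t]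
proof (rule O2)
  fix j assume j: "j < d"
  show "v * adj (rowm (W t) j) = 0\<^sub>m 1 1" using orth[OF s t st v W_row[OF t j]] .
qed

lemma W_orth: assumes s: "s \<in> S" and t: "t \<in> S" and st: "s \<noteq> t" shows "W s * W t = 0\<^sub>m d d"
proof (rule rows_eq)
  have Wc: "W s \<in> carrier_mat d d" by (rule W_carrier[OF s])
  have Wt: "W t \<in> carrier_mat d d" by (rule W_carrier[OF t])
  show "W s * W t \<in> carrier_mat d d" using Wc Wt by simp
  show "0\<^sub>m d d \<in> carrier_mat d d" by simp
  fix k assume k: "k < d"
  have "rowm (W s * W t) k = rowm (W s) k * W t" using Wc Wt k by (rule rowm_mult)
  also have "\<dots> = rowm (W s) k * adj (W t)" using W_sa[OF t] by simp
  also have "\<dots> = 0\<^sub>m 1 d" by (rule row_orth[OF s t st W_row[OF s k]])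
  also have "\<dots> = rowm (0\<^sub>m d d) k" using k by (simp add: rowm_zero)
  finally show "rowm (W s * W t) k = rowm (0\<^sub>m d d) k" .
qed


definition E2 :: "complex mat set" where
  "E2 = {M \<in> carrier_mat d d. \<exists>T. finite T \<and> (\<forall>s\<in>S. s \<notin> T \<longrightarrow> (\<forall>v\<in>F () s. v * M = 0\<^sub>m 1 d))}"

lemma E2_msub: "msubspace d d E2"
proof (rule msubI)
  show "E2 \<subseteq> carrier_mat d d" unfolding E2_def by blast
  have "v * 0\<^sub>m d d = 0\<^sub>m 1 d" if "s \<in> S" "v \<in> F () s" for s v
    using Vcar[OF that] by (rule right_mult_zero_mat)
  then show "0\<^sub>m d d \<in> E2" unfolding E2_def by auto
next
  fix a b assume a: "a \<in> E2" and b: "b \<in> E2"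
  then obtain T T' where ac: "a \<in> carrier_mat d d" and bc: "b \<in> carrier_mat d d"
    and T: "finite T" "\<forall>s\<in>S. s \<notin> T \<longrightarrow> (\<forall>v\<in>F () s. v * a = 0\<^sub>m 1 d)"
    and T': "finite T'" "\<forall>s\<in>S. s \<notin> T' \<longrightarrow> (\<forall>v\<in>F () s. v * b = 0\<^sub>m 1 d)"
    unfolding E2_def by blast
  have "v * (a + b) = 0\<^sub>m 1 d" if s: "s \<in> S" "s \<notin> T \<union> T'" and v: "v \<in> F () s" for s v
  proof -
    have "v * (a + b) = v * a + v * b" using Vcar[OF s(1) v] ac bc by (rule mult_add_distrib_mat)
    also have "\<dots> = 0\<^sub>m 1 d + 0\<^sub>m 1 d" using T(2) T'(2) s v by auto
    finally show ?thesis by simp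
  qed
  moreover have "finite (T \<union> T')" using T T' by simp
  moreover have "a + b \<in> carrier_mat d d" using ac bc by simp
  ultimately show "a + b \<in> E2" unfolding E2_def by blast
next
  fix a and c :: complex assume a: "a \<in> E2"
  then obtain T where ac: "a \<in> carrier_mat d d"
    and T: "finite T" "\<forall>s\<in>S. s \<notin> T \<longrightarrow> (\<forall>v\<in>F () s. v * a = 0\<^sub>m 1 d)"
    unfolding E2_def by blast
  have "v * (c \<cdot>\<^sub>m a) = 0\<^sub>m 1 d" if s: "s \<in> S" "s \<notin> T" and v: "v \<in> F () s" for s v
  proof -
    have "v * (c \<cdot>\<^sub>m a) = c \<cdot>\<^sub>m (v * a)" using Vcar[OF s(1) v] ac by (rule mult_smult_distrib)
    also have "\<dots> = c \<cdot>\<^sub>m 0\<^sub>m 1 d" using T(2) s v by auto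
    also have "\<dots> = 0\<^sub>m 1 d" by (rule eq_matI) simp_all
    finally show ?thesis .
  qed
  moreover have "c \<cdot>\<^sub>m a \<in> carrier_mat d d" using ac by simp
  ultimately show "c \<cdot>\<^sub>m a \<in> E2" unfolding E2_def using T(1) by blast
qed

lemma W_fin: "finite {s\<in>S. W s \<noteq> 0\<^sub>m d d}"
proof -
  have "1\<^sub>m d \<in> E2"
  proof (rule qfunD(4)[OF F E2_msub])
    fix t u r assume t: "t \<in> S" and u: "u \<in> F () t" and r: "r \<in> F () t"
    have gc: "adj u * r \<in> carrier_mat d d" by (rule mult_carrier_mat[OF adj_carrier[OF Vcar[OF t u]] Vcar[OF t r]])
    have "\<forall>s\<in>S. s \<notin> {t} \<longrightarrow> (\<forall>v\<in>F () s. v * (adj u * r) = 0\<^sub>m 1 d)"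
      using gen_zero[OF _ t _ u r] by blast
    then show "adj u * r \<in> E2" unfolding E2_def using gc by blast
  qed
  then obtain T where T: "finite T" "\<forall>s\<in>S. s \<notin> T \<longrightarrow> (\<forall>v\<in>F () s. v * 1\<^sub>m d = 0\<^sub>m 1 d)"
    unfolding E2_def by blast
  have "W s = 0\<^sub>m d d" if s: "s \<in> S" "s \<notin> T" for s
  proof (rule rows_eq)
    show "W s \<in> carrier_mat d d" by (rule W_carrier[OF s(1)])
    show "0\<^sub>m d d \<in> carrier_mat d d" by simp
    fix k assume k: "k < d"
    have rk: "rowm (W s) k \<in> F () s" by (rule W_row[OF s(1) k])
    have "rowm (W s) k = rowm (W s) k * 1\<^sub>m d" by (rule right_mult_one_mat[symmetric, OF Vcar[OF s(1) rk]])
    also have "\<dots> = 0\<^sub>m 1 d" using T(2) s rk by blast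
    also have "\<dots> = rowm (0\<^sub>m d d) k" using k by (simp add: rowm_zero)
    finally show "rowm (W s) k = rowm (0\<^sub>m d d) k" .
  qed
  hence "{s\<in>S. W s \<noteq> 0\<^sub>m d d} \<subseteq> T" by blast
  thus ?thesis using T(1) by (rule finite_subset)
qed

definition pp :: "'s \<Rightarrow> complex mat" where
  "pp s = (if s \<in> S then W s else 0\<^sub>m d d)"

lemma pp_adj_u: assumes t: "t \<in> S" and u: "u \<in> F () t" and s: "s \<in> S"
  shows "pp s * adj u = (if s = t then adj u else 0\<^sub>m d 1)"
proof -
  have uc: "u \<in> carrier_mat 1 d" by (rule Vcar[OF t u])
  have Wc: "W s \<in> carrier_mat d d" by (rule W_carrier[OF s])
  have "adj (u * adj (W s)) = adj (adj (W s)) * adj u" using uc adj_carrier[OF Wc] by (rule adj_mult)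
  hence e: "W s * adj u = adj (u * adj (W s))" by simp
  show ?thesis
  proof (cases "s = t")
    case True
    have "u * adj (W s) = u" using W_sa[OF s] W_fix[OF t u] True by simp
    then show ?thesis using e True s by (simp add: pp_def)
  next
    case False
    have "u * adj (W s) = 0\<^sub>m 1 d" by (rule row_orth[OF t s _ u]) (use False in simp)
    then show ?thesis using e False s by (simp add: pp_def)
  qed
qed

lemma pp_sum: "msum d pp {s\<in>S. pp s \<noteq> 0\<^sub>m d d} = 1\<^sub>m d"
proof -
  let ?Z = "{s\<in>S. pp s \<noteq> 0\<^sub>m d d}"
  let ?T = "msum d pp ?Z"
  have Zeq: "?Z = {s\<in>S. W s \<noteq> 0\<^sub>m d d}" by (auto simp: pp_def)
  have finZ: "finite ?Z" unfolding Zeq by (rule W_fin)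
  have ppc: "pp s \<in> carrier_mat d d" if "s \<in> ?Z" for s using that W_carrier by (auto simp: pp_def)
  have Tc: "?T \<in> carrier_mat d d" by simp
  define G where "G = {M \<in> carrier_mat d d. ?T * M = M}"
  have Gsub: "msubspace d d G"
  proof (rule msubI)
    show "G \<subseteq> carrier_mat d d" unfolding G_def by blast
    show "0\<^sub>m d d \<in> G" unfolding G_def using right_mult_zero_mat[OF Tc, of d] by simp
  next
    fix a b assume "a \<in> G" "b \<in> G"
    then have a: "a \<in> carrier_mat d d" "?T * a = a" and b: "b \<in> carrier_mat d d" "?T * b = b"
      unfolding G_def by auto
    have "?T * (a + b) = ?T * a + ?T * b" using Tc a(1) b(1) by (rule mult_add_distrib_mat)
    then show "a + b \<in> G" unfolding G_def using a b by simp
  next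
    fix a and c :: complex assume "a \<in> G"
    then have a: "a \<in> carrier_mat d d" "?T * a = a" unfolding G_def by auto
    have "?T * (c \<cdot>\<^sub>m a) = c \<cdot>\<^sub>m (?T * a)" using Tc a(1) by (rule mult_smult_distrib)
    then show "c \<cdot>\<^sub>m a \<in> G" unfolding G_def using a by simp
  qed
  have "1\<^sub>m d \<in> G"
  proof (rule qfunD(4)[OF F Gsub])
    fix t u r assume t: "t \<in> S" and u: "u \<in> F () t" and r: "r \<in> F () t"
    have uc: "u \<in> carrier_mat 1 d" by (rule Vcar[OF t u])
    have rc: "r \<in> carrier_mat 1 d" by (rule Vcar[OF t r])
    have auc: "adj u \<in> carrier_mat d 1" using uc by simp
    have "?T * adj u = mat d 1 (\<lambda>(i,j). \<Sum>s\<in>?Z. (pp s * adj u) $$ (i,j))"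
      using finZ auc ppc by (rule msum_mult)
    also have "\<dots> = adj u"
    proof (rule eq_matI)
      fix i j assume i: "i < dim_row (adj u)" and j: "j < dim_col (adj u)"
      have "(\<Sum>s\<in>?Z. (pp s * adj u) $$ (i,j)) = (\<Sum>s\<in>?Z. if s = t then adj u $$ (i,j) else 0)"
      proof (rule sum.cong)
        fix s assume "s \<in> ?Z"
        then have s: "s \<in> S" by simp
        show "(pp s * adj u) $$ (i,j) = (if s = t then adj u $$ (i,j) else 0)"
          using pp_adj_u[OF t u s] i j uc by simp
      qed simp
      also have "\<dots> = (if t \<in> ?Z then adj u $$ (i,j) else 0)" using finZ by simp
      also have "\<dots> = adj u $$ (i,j)"
      proof (cases "t \<in> ?Z")
        case False
        hence "W t = 0\<^sub>m d d" using t by (simp add: pp_def)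
        hence "u = 0\<^sub>m 1 d" using W_fix[OF t u] uc by simp
        then show ?thesis using False i j by simp
      qed simp
      finally show "mat d 1 (\<lambda>(i,j). \<Sum>s\<in>?Z. (pp s * adj u) $$ (i,j)) $$ (i,j) = adj u $$ (i,j)"
        using i j uc by simp
    qed (use uc in simp_all)
    finally have Tu: "?T * adj u = adj u" .
    have "?T * (adj u * r) = (?T * adj u) * r" using assoc_mult_mat[OF Tc auc rc] by simp
    also have "\<dots> = adj u * r" using Tu by simp
    finally show "adj u * r \<in> G" unfolding G_def using auc rc by simp
  qed
  hence "?T * 1\<^sub>m d = 1\<^sub>m d" unfolding G_def by simp
  thus ?thesis using Tc by simp
qed

lemma pp_PVM: "pp \<in> PVM d S"
  unfolding PVM_def
proof (intro CollectI conjI ballI allI impI)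
  fix s assume s: "s \<in> S"
  show "pp s \<in> carrier_mat d d" using W_carrier[OF s] s by (simp add: pp_def)
  show "pp s * pp s = pp s" using W_idem[OF s] s by (simp add: pp_def)
  show "adj (pp s) = pp s" using W_sa[OF s] s by (simp add: pp_def)
next
  fix s t assume s: "s \<in> S" and t: "t \<in> S" and st: "s \<noteq> t"
  show "pp s * pp t = 0\<^sub>m d d" using W_orth[OF s t st] s t by (simp add: pp_def)
next
  fix s assume "s \<notin> S" thus "pp s = 0\<^sub>m d d" by (simp add: pp_def)
next
  have "{s\<in>S. pp s \<noteq> 0\<^sub>m d d} = {s\<in>S. W s \<noteq> 0\<^sub>m d d}" by (auto simp: pp_def)
  thus "finite {s\<in>S. pp s \<noteq> 0\<^sub>m d d}" using W_fin by simp
next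
  show "msum d pp {s\<in>S. pp s \<noteq> 0\<^sub>m d d} = 1\<^sub>m d" by (rule pp_sum)
qed

lemma pp_F: "pvm_to_fun d S pp = F"
proof (intro ext)
  fix x :: unit and s
  show "pvm_to_fun d S pp x s = F x s"
  proof (cases "s \<in> S")
    case True
    then show ?thesis using W_img[OF True] by (simp add: pvm_to_fun_eq pp_def)
  next
    case False
    then show ?thesis using qfunD(2)[OF F False] by (simp add: pvm_to_fun_eq)
  qed
qed

lemma surj_F: "F \<in> pvm_to_fun d S ` PVM d S"
  using pp_F pp_PVM by (metis imageI)

end

theorem mainTheorem14:
  fixes d :: nat and S :: "'s set"
  assumes "d \<ge> 1"
  shows "bij_betw (pvm_to_fun d S) (PVM d S) {F. qfun (qH d) (qclassical S) F}"
  unfolding bij_betw_def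
proof
  show "inj_on (pvm_to_fun d S) (PVM d S)" by (rule pvm_inj)
  show "pvm_to_fun d S ` PVM d S = {F. qfun (qH d) (qclassical S) F}"
  proof
    show "pvm_to_fun d S ` PVM d S \<subseteq> {F. qfun (qH d) (qclassical S) F}"
      using pvm_qfun by blast
    show "{F. qfun (qH d) (qclassical S) F} \<subseteq> pvm_to_fun d S ` PVM d S"
      using surj_F by blast
  qed
qed

end
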